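(* Fix $R\in[0,1)$ and let $r_1=\tfrac12-\tfrac R2+\tfrac{1-R^2}4$, $r_2=\tfrac12-\tfrac R2-\tfrac{1-R^2}4$. For $0<\mu<L$ with $\kappa=\mu/L$, set $\mu_1=\mu$, $L_1=\mu+r_1(L-\mu)$, $\mu_2=L-r_2(L-\mu)$, $L_2=L$, $$s=1+2\frac{\mu_1L_1\mu_2}{(L_2-\mu_1)(L_2-L_1)(L_2-\mu_2)},\qquad \sqrt m=\big(s-\sqrt{s^2-1}\big)^{1/3}$$ (the asymptotic rate factor of the optimally tuned 3-cycle heavy ball method on $[\mu_1,L_1]\cup[\mu_2,L_2]$). Then as $\kappa\to0$, $$\sqrt m=1-2\sqrt\kappa\sqrt{\frac{1-R^2/9}{1-R^2}}+o(\sqrt\kappa).$$ *)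

theory Defs
  imports Complex_Main
begin

definition hb_r1 :: "real \<Rightarrow> real" where
  "hb_r1 R = 1/2 - R/2 + (1 - R^2)/4"

definition hb_r2 :: "real \<Rightarrow> real" where
  "hb_r2 R = 1/2 - R/2 - (1 - R^2)/4"

definition hb_s :: "real \<Rightarrow> real \<Rightarrow> real \<Rightarrow> real" where
  "hb_s R \<mu> L =
    (let \<mu>1 = \<mu>; L1 = \<mu> + hb_r1 R * (L - \<mu>);
         \<mu>2 = L - hb_r2 R * (L - \<mu>); L2 = L
     in 1 + 2 * (\<mu>1 * L1 * \<mu>2) / ((L2 - \<mu>1) * (L2 - L1) * (L2 - \<mu>2)))"

definition hb_sqrt_m :: "real \<Rightarrow> real \<Rightarrow> real \<Rightarrow> real" where
  "hb_sqrt_m R \<mu> L = root 3 (hb_s R \<mu> L - sqrt ((hb_s R \<mu> L)^2 - 1))"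

end

theory Submission
  imports Defs
begin

definition Hf :: "real \<Rightarrow> real \<Rightarrow> real" where
  "Hf R k = 2*(k + hb_r1 R*(1-k))*(1 - hb_r2 R*(1-k))/((1-k)^3*(1-hb_r1 R)*hb_r2 R)"

lemma r2_eq: "hb_r2 R = (1-R)^2/4" unfolding hb_r2_def by (simp add: field_simps power2_eq_square)
lemma r1_eq: "1 - hb_r1 R = (1+R)^2/4" unfolding hb_r1_def by (simp add: field_simps power2_eq_square)

lemma s_homog:
  assumes "0 < \<mu>" "\<mu> < L" "hb_r2 R \<noteq> 0" "1 - hb_r1 R \<noteq> 0"
  shows "hb_s R \<mu> L = 1 + (\<mu>/L) * Hf R (\<mu>/L)"
proof -
  define k where "k = \<mu>/L"
  have L: "L > 0" using assms by simp
  have mu: "\<mu> = k*L" using L k_def by simp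
  have k1: "1 - k \<noteq> 0" using assms L k_def by (auto simp: field_simps)
  have k1': "L - k*L \<noteq> 0" using k1 L by (simp add: right_diff_distrib[symmetric])
  define a where "a = hb_r1 R"
  define b where "b = hb_r2 R"
  have e1: "L - k*L = L*(1-k)" by (simp add: algebra_simps)
  have e2: "L - (k*L + a*(L-k*L)) = L*((1-k)*(1-a))" by (simp add: algebra_simps)
  have e3: "L - (L - b*(L-k*L)) = L*(b*(1-k))" by (simp add: algebra_simps)
  have e4: "k*L + a*(L-k*L) = L*(k+a*(1-k))" by (simp add: algebra_simps)
  have e5: "L - b*(L-k*L) = L*(1-b*(1-k))" by (simp add: algebra_simps)
  have "hb_s R \<mu> L = 1 + 2 * (k*L * (L*(k+a*(1-k))) * (L*(1-b*(1-k)))) /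
      ((L*(1-k)) * (L*((1-k)*(1-a))) * (L*(b*(1-k))))"
  proof -
    have X: "k*L * (k*L + a*(L-k*L)) * (L - b*(L-k*L)) = k*L * (L*(k+a*(1-k))) * (L*(1-b*(1-k)))"
      by (simp add: algebra_simps)
    have Y: "(L - k*L) * (L - (k*L + a*(L-k*L))) * (L - (L - b*(L-k*L)))
       = (L*(1-k)) * (L*((1-k)*(1-a))) * (L*(b*(1-k)))"
      by (simp add: algebra_simps)
    show ?thesis unfolding hb_s_def Let_def mu a_def[symmetric] b_def[symmetric] X Y by simp
  qed
  also have "\<dots> = 1 + (L^3*(2*k*(k + a*(1-k))*(1 - b*(1-k))))/(L^3*((1-k)^3*(1-a)*b))"
    by (simp add: algebra_simps power3_eq_cube)
  also have "\<dots> = 1 + (2*k*(k + a*(1-k))*(1 - b*(1-k)))/((1-k)^3*(1-a)*b)"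
    using L by simp
  also have "\<dots> = 1 + k * (2*(k + a*(1-k))*(1 - b*(1-k))/((1-k)^3*(1-a)*b))"
    by simp
  finally show ?thesis unfolding k_def[symmetric] Hf_def a_def b_def .
qed


lemma Hf_cont:
  assumes "hb_r2 R \<noteq> 0" "1 - hb_r1 R \<noteq> 0"
  shows "(Hf R \<longlongrightarrow> Hf R 0) (at_right 0)"
proof -
  have "isCont (Hf R) 0" unfolding Hf_def using assms
    by (intro continuous_intros) auto
  thus ?thesis unfolding isCont_def by (rule tendsto_mono[OF at_le, rotated]) simp
qed

lemma key_limit:
  assumes "hb_r2 R \<noteq> 0" "1 - hb_r1 R \<noteq> 0"
  defines "U \<equiv> \<lambda>k. (1 + k * Hf R k) - sqrt ((1 + k * Hf R k)^2 - 1)"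
  shows "((\<lambda>k. (root 3 (U k) - 1) / sqrt k) \<longlongrightarrow> - sqrt (2 * Hf R 0) / 3) (at_right 0)"
proof -
  define H where "H = Hf R"
  define V where "V = (\<lambda>k. sqrt k * H k - sqrt (H k * (2 + k * H k)))"
  have HT: "(H \<longlongrightarrow> H 0) (at_right 0)" unfolding H_def by (rule Hf_cont[OF assms(1,2)])
  have sq0: "((\<lambda>k::real. sqrt k) \<longlongrightarrow> 0) (at_right 0)"
  proof -
    have "((\<lambda>k::real. sqrt k) \<longlongrightarrow> sqrt 0) (at_right 0)"
      by (intro tendsto_intros tendsto_ident_at)
    thus ?thesis by simp
  qed
  have VT: "(V \<longlongrightarrow> 0 * H 0 - sqrt (H 0 * (2 + 0 * H 0))) (at_right 0)"
    unfolding V_def by (intro tendsto_intros sq0 HT tendsto_ident_at)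
  have ev: "eventually (\<lambda>k::real. k > 0) (at_right 0)"
    by (simp add: eventually_at_right_less)
  have UV: "U k - 1 = sqrt k * V k" if "k > 0" for k
  proof -
    have "(1 + k * H k)^2 - 1 = k * (H k * (2 + k * H k))" by (simp add: algebra_simps power2_eq_square)
    hence "sqrt ((1 + k * H k)^2 - 1) = sqrt k * sqrt (H k * (2 + k * H k))"
      by (simp add: real_sqrt_mult)
    moreover have "k = sqrt k * sqrt k" using that by simp
    ultimately have "U k - 1 = sqrt k * sqrt k * H k - sqrt k * sqrt (H k * (2 + k * H k))"
      unfolding U_def H_def by simp
    thus ?thesis unfolding V_def by (simp add: algebra_simps)
  qed
  have UT: "(U \<longlongrightarrow> 1) (at_right 0)"
  proof -
    have "((\<lambda>k. 1 + sqrt k * V k) \<longlongrightarrow> 1 + 0 * (0 * H 0 - sqrt (H 0 * (2 + 0 * H 0)))) (at_right 0)"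
      by (intro tendsto_intros sq0 VT)
    hence "((\<lambda>k. 1 + sqrt k * V k) \<longlongrightarrow> 1) (at_right 0)" by simp
    moreover have E: "eventually (\<lambda>k. 1 + sqrt k * V k = U k) (at_right 0)"
      using ev by eventually_elim (use UV in force)
    ultimately show ?thesis using tendsto_cong[OF E] by simp
  qed
  define A where "A = (\<lambda>k. root 3 (U k))"
  have AT: "(A \<longlongrightarrow> root 3 1) (at_right 0)" unfolding A_def by (intro tendsto_intros UT)
  have pos: "A k ^ 2 + A k + 1 > 0" for k
  proof -
    have "A k ^ 2 + A k + 1 = (A k + 1/2)^2 + 3/4" by (simp add: algebra_simps power2_eq_square)
    also have "\<dots> > 0" by (simp add: add_nonneg_pos)
    finally show ?thesis .
  qed
  have eq: "(root 3 (U k) - 1) / sqrt k = V k / (A k ^ 2 + A k + 1)" if "k > 0" for k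
  proof -
    have c: "A k ^ 3 = U k" unfolding A_def by (simp add: odd_real_root_pow)
    have "U k - 1 = (A k - 1) * (A k ^ 2 + A k + 1)" unfolding c[symmetric]
      by (simp add: algebra_simps power2_eq_square power3_eq_cube)
    hence "A k - 1 = (U k - 1) / (A k ^ 2 + A k + 1)" using pos[of k]
      by (simp add: field_simps)
    hence "root 3 (U k) - 1 = sqrt k * V k / (A k ^ 2 + A k + 1)" using UV[OF that] unfolding A_def by simp
    moreover have "sqrt k > 0" using that by simp
    ultimately show ?thesis by simp
  qed
  have "((\<lambda>k. V k / (A k ^ 2 + A k + 1)) \<longlongrightarrow>
      (0 * H 0 - sqrt (H 0 * (2 + 0 * H 0))) / (root 3 1 ^ 2 + root 3 1 + 1)) (at_right 0)"
    by (intro tendsto_intros VT AT) simp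
  hence T: "((\<lambda>k. V k / (A k ^ 2 + A k + 1)) \<longlongrightarrow> - sqrt (2 * Hf R 0) / 3) (at_right 0)"
    by (simp add: H_def mult.commute)
  have "eventually (\<lambda>k. V k / (A k ^ 2 + A k + 1) = (root 3 (U k) - 1) / sqrt k) (at_right 0)"
    using ev by eventually_elim (use eq in force)
  from tendsto_cong[OF this, THEN iffD1, OF T] show ?thesis unfolding A_def .
qed


lemma H0_val:
  assumes "0 \<le> R" "R < 1"
  shows "2 * Hf R 0 / 9 = 4 * ((1 - R^2/9) / (1 - R^2))"
proof -
  have "R^2 < 1^2" using assms by (intro power_strict_mono) auto
  hence a: "1 - R \<noteq> 0" "1 + R \<noteq> 0" "1 - R^2 \<noteq> 0" using assms by auto
  have "1 - R^2 = (1-R)*(1+R)" by (simp add: algebra_simps power2_eq_square)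
  note e = this
  have r1: "hb_r1 R = (1-R)*(3+R)/4" unfolding hb_r1_def by (simp add: field_simps power2_eq_square)
  have r2': "1 - hb_r2 R = (3-R)*(1+R)/4" unfolding hb_r2_def by (simp add: field_simps power2_eq_square)
  have "Hf R 0 = 2 * hb_r1 R * (1 - hb_r2 R) / ((1 - hb_r1 R) * hb_r2 R)" unfolding Hf_def by simp
  also have "\<dots> = 2 * ((1-R)*(3+R)/4) * ((3-R)*(1+R)/4) / (((1+R)^2/4) * ((1-R)^2/4))"
    unfolding r2' unfolding r1_eq unfolding r2_eq unfolding r1 ..
  also have "\<dots> = 2 * ((3+R)*(3-R)) / ((1+R)*(1-R))"
  proof (subst frac_eq_eq)
    show "(1 + R)\<^sup>2 / 4 * ((1 - R)\<^sup>2 / 4) \<noteq> 0" using a by simp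
    show "(1 + R) * (1 - R) \<noteq> 0" using a by simp
  qed (simp add: field_simps power2_eq_square)
  finally have "Hf R 0 = 2 * ((3+R)*(3-R)) / ((1+R)*(1-R))" .
  moreover have "(3+R)*(3-R) = 9 - R^2" by (simp add: algebra_simps power2_eq_square)
  moreover have "(1+R)*(1-R) = 1 - R^2" by (simp add: algebra_simps power2_eq_square)
  ultimately have "Hf R 0 = 2 * (9 - R^2) / (1 - R^2)" by simp
  then show ?thesis using a by (simp add: field_simps)
qed

theorem mainTheorem17:
  fixes R :: real
  assumes "0 \<le> R" and "R < 1"
  shows "\<forall>\<epsilon>>0. \<exists>\<delta>>0. \<forall>\<mu> L :: real. 0 < \<mu> \<and> \<mu> < L \<and> \<mu> / L < \<delta> \<longrightarrow>
           \<bar>hb_sqrt_m R \<mu> L - (1 - 2 * sqrt (\<mu> / L) * sqrt ((1 - R^2 / 9) / (1 - R^2)))\<bar>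
             \<le> \<epsilon> * sqrt (\<mu> / L)"
proof (intro allI impI)
  fix \<epsilon> :: real assume e: "\<epsilon> > 0"
  have r2: "hb_r2 R \<noteq> 0" using assms unfolding r2_eq by simp
  have r1: "1 - hb_r1 R \<noteq> 0" using assms unfolding r1_eq by simp
  define U where "U \<equiv> \<lambda>k. (1 + k * Hf R k) - sqrt ((1 + k * Hf R k)^2 - 1)"
  define q where "q = sqrt ((1 - R^2 / 9) / (1 - R^2))"
  have cq: "sqrt (2 * Hf R 0) / 3 = 2 * q"
  proof -
    have "sqrt (2 * Hf R 0) / 3 = sqrt (2 * Hf R 0 / 9)" by (simp add: real_sqrt_divide)
    also have "\<dots> = sqrt 4 * q" unfolding H0_val[OF assms] q_def real_sqrt_mult ..
    also have "sqrt 4 = (2::real)" by (simp add: real_sqrt_eq_iff[symmetric]) 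
    finally show ?thesis .
  qed
  have T: "((\<lambda>k. (root 3 (U k) - 1) / sqrt k) \<longlongrightarrow> - (2*q)) (at_right 0)"
    using key_limit[OF r2 r1] unfolding U_def cq[symmetric] by simp
  have "eventually (\<lambda>k. dist ((root 3 (U k) - 1) / sqrt k) (- (2*q)) < \<epsilon>) (at_right 0)"
    using tendstoD[OF T e] .
  then obtain b where b: "b > 0" "\<And>k. k > 0 \<Longrightarrow> k < b \<Longrightarrow>
      dist ((root 3 (U k) - 1) / sqrt k) (- (2*q)) < \<epsilon>"
    unfolding eventually_at_right_field by auto
  show "\<exists>\<delta>>0. \<forall>\<mu> L :: real. 0 < \<mu> \<and> \<mu> < L \<and> \<mu> / L < \<delta> \<longrightarrow>
           \<bar>hb_sqrt_m R \<mu> L - (1 - 2 * sqrt (\<mu> / L) * sqrt ((1 - R^2 / 9) / (1 - R^2)))\<bar>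
             \<le> \<epsilon> * sqrt (\<mu> / L)"
  proof (intro exI[of _ b] conjI allI impI b(1))
    fix \<mu> L :: real assume h: "0 < \<mu> \<and> \<mu> < L \<and> \<mu> / L < b"
    define k where "k = \<mu> / L"
    have k0: "k > 0" using h k_def by simp
    have sk: "sqrt k > 0" using k0 by simp
    have hs: "hb_s R \<mu> L = 1 + k * Hf R k" unfolding k_def using h by (intro s_homog r2 r1) auto
    have m: "hb_sqrt_m R \<mu> L = root 3 (U k)"
      unfolding hb_sqrt_m_def hs U_def by simp
    have d: "\<bar>(root 3 (U k) - 1) / sqrt k + 2*q\<bar> < \<epsilon>"
      using b(2)[OF k0] h k_def by (simp add: dist_real_def)
    have "\<bar>root 3 (U k) - (1 - 2 * sqrt k * q)\<bar> = \<bar>(root 3 (U k) - 1) / sqrt k + 2*q\<bar> * sqrt k"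
    proof -
      have "root 3 (U k) - (1 - 2 * sqrt k * q) = ((root 3 (U k) - 1) / sqrt k + 2*q) * sqrt k"
        using sk by (simp add: field_simps)
      thus ?thesis using sk by (simp add: abs_mult)
    qed
    also have "\<dots> \<le> \<epsilon> * sqrt k" using d sk by (intro mult_right_mono) auto
    finally show "\<bar>hb_sqrt_m R \<mu> L - (1 - 2 * sqrt (\<mu> / L) * sqrt ((1 - R^2 / 9) / (1 - R^2)))\<bar>
             \<le> \<epsilon> * sqrt (\<mu> / L)" unfolding m q_def[symmetric] k_def[symmetric] .
  qed
qed

end
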